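(* Let $V$ be a finite set, $f:2^V\to\mathbb{R}_+$ nonnegative submodular, $t_1,\ldots,t_k\in V$ distinct terminals, and $\mathbf{x}=(x_{i,j})_{i\in[k],j\in V}$ with $x_{i,j}\ge0$, $\sum_{i=1}^k x_{i,j}=1$ for all $j$, and $x_{i,t_i}=1$ for all $i$. For $\theta\in[0,1]$ define $A_i(\theta)=\{j: x_{i,j}>\theta\}$, $U(\theta)=\{j:\max_i x_{i,j}\le\theta\}$ and $B(\theta)=\{j: 1-\max_i x_{i,j}\ge\theta\}$. Consider the rounding which picks $\theta\in(\tfrac12,1]$ uniformly and $i'\in[k]$ uniformly at random (independently), and assigns $A_i(\theta)$ to terminal $i$ for $i\ne i'$ and $A_{i'}(\theta)\cup U(\theta)$ to terminal $i'$. Then the expected cost $\mathbb{E}[\sum_i f(S_i)]$ of the resulting partition $(S_1,\ldots,S_k)$ equals $$\Big(2-\frac{2}{k}\Big)\sum_{i=1}^k\int_{1/2}^1 f(A_i(\theta))\,d\theta+\frac{2}{k}\sum_{i=1}^k\int_0^{1/2} f(A_i(\theta)\cup B(\theta))\,d\theta.$$ *)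

theory Defs
  imports "HOL-Analysis.Analysis"
begin

definition submodular_on :: "'a set \<Rightarrow> ('a set \<Rightarrow> real) \<Rightarrow> bool" where
  "submodular_on V f \<longleftrightarrow>
     (\<forall>A B. A \<subseteq> V \<longrightarrow> B \<subseteq> V \<longrightarrow> f (A \<union> B) + f (A \<inter> B) \<le> f A + f B)"

text \<open>Terminals are indexed by i in {..<k}.  x i j is the fractional assignment.\<close>
definition A_set :: "'a set \<Rightarrow> (nat \<Rightarrow> 'a \<Rightarrow> real) \<Rightarrow> nat \<Rightarrow> real \<Rightarrow> 'a set" where
  "A_set V x i \<theta> = {j \<in> V. x i j > \<theta>}"

definition U_set :: "'a set \<Rightarrow> nat \<Rightarrow> (nat \<Rightarrow> 'a \<Rightarrow> real) \<Rightarrow> real \<Rightarrow> 'a set" where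
  "U_set V k x \<theta> = {j \<in> V. Max ((\<lambda>i. x i j) ` {..<k}) \<le> \<theta>}"

definition B_set :: "'a set \<Rightarrow> nat \<Rightarrow> (nat \<Rightarrow> 'a \<Rightarrow> real) \<Rightarrow> real \<Rightarrow> 'a set" where
  "B_set V k x \<theta> = {j \<in> V. 1 - Max ((\<lambda>i. x i j) ` {..<k}) \<ge> \<theta>}"

definition rounded_part :: "'a set \<Rightarrow> nat \<Rightarrow> (nat \<Rightarrow> 'a \<Rightarrow> real) \<Rightarrow> real \<Rightarrow> nat \<Rightarrow> nat \<Rightarrow> 'a set" where
  "rounded_part V k x \<theta> i' i =
     (if i = i' then A_set V x i \<theta> \<union> U_set V k x \<theta> else A_set V x i \<theta>)"

text \<open>Expected cost of the rounding: \<theta> uniform on (1/2,1] (density 2),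
  i' uniform on {..<k}, independent.\<close>
definition expected_rounding_cost ::
    "'a set \<Rightarrow> nat \<Rightarrow> ('a set \<Rightarrow> real) \<Rightarrow> (nat \<Rightarrow> 'a \<Rightarrow> real) \<Rightarrow> real" where
  "expected_rounding_cost V k f x =
     (\<Sum>i'<k. (1 / real k) *
        (LINT \<theta>:{1/2<..1}|lborel. 2 * (\<Sum>i<k. f (rounded_part V k x \<theta> i' i))))"

end

theory Submission
  imports Defs
begin

lemma setfun_meas:
  fixes Q :: "'a \<Rightarrow> 'b \<Rightarrow> bool"
  assumes "finite V" "\<And>j. j \<in> V \<Longrightarrow> Measurable.pred M (Q j)"
  shows "(\<lambda>\<theta>. {j\<in>V. Q j \<theta>}) \<in> M \<rightarrow>\<^sub>M count_space UNIV"
  using assms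
proof (induction V rule: finite_induct)
  case empty show ?case by simp
next
  case (insert a F)
  have e: "(\<lambda>\<theta>. {j\<in>insert a F. Q j \<theta>}) = (\<lambda>\<theta>. if Q a \<theta> then insert a {j\<in>F. Q j \<theta>} else {j\<in>F. Q j \<theta>})"
    by (rule ext) auto
  have m: "(\<lambda>\<theta>. {j\<in>F. Q j \<theta>}) \<in> M \<rightarrow>\<^sub>M count_space UNIV" using insert by auto
  have m2: "(\<lambda>\<theta>. insert a {j\<in>F. Q j \<theta>}) \<in> M \<rightarrow>\<^sub>M count_space UNIV"
  proof -
    have "insert a \<in> count_space UNIV \<rightarrow>\<^sub>M count_space UNIV" by simp
    from measurable_compose[OF m this] show ?thesis by simp
  qed
  have p: "Measurable.pred M (Q a)" using insert by auto
  have s: "{x\<in>space M. Q a x} \<in> sets M" using p by measurable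
  show ?case unfolding e by (rule measurable_If[OF m2 m s])
qed

lemma fun_meas:
  fixes Q :: "'a \<Rightarrow> 'b \<Rightarrow> bool" and f :: "'a set \<Rightarrow> real"
  assumes "finite V" "\<And>j. j \<in> V \<Longrightarrow> Measurable.pred M (Q j)"
  shows "(\<lambda>\<theta>. f {j\<in>V. Q j \<theta>}) \<in> borel_measurable M"
proof -
  have "f \<in> count_space UNIV \<rightarrow>\<^sub>M borel" by simp
  from measurable_compose[OF setfun_meas[OF assms] this] show ?thesis by simp
qed

lemma fun_setint:
  fixes Q :: "'a \<Rightarrow> real \<Rightarrow> bool" and f :: "'a set \<Rightarrow> real"
  assumes "finite V" "\<And>j. j \<in> V \<Longrightarrow> Measurable.pred lborel (Q j)"
    and S: "S \<in> sets lborel" "emeasure lborel S < \<infinity>"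
  shows "set_integrable lborel S (\<lambda>\<theta>. f {j\<in>V. Q j \<theta>})"
proof -
  define B where "B = (\<Sum>T\<in>Pow V. \<bar>f T\<bar>)"
  have bnd: "\<bar>f {j\<in>V. Q j \<theta>}\<bar> \<le> B" for \<theta>
    unfolding B_def using assms(1)
    by (intro member_le_sum) auto
  have m: "(\<lambda>\<theta>. f {j\<in>V. Q j \<theta>}) \<in> borel_measurable lborel" by (rule fun_meas[OF assms(1,2)])
  show ?thesis unfolding set_integrable_def
    apply (rule integrableI_bounded_set[where A=S and B=B])
    using S m bnd by (auto simp: indicator_def)
qed


lemma set_integral_sum':
  fixes g :: "'i \<Rightarrow> 'b \<Rightarrow> real"
  assumes "\<And>i. i \<in> I \<Longrightarrow> set_integrable M A (g i)"
  shows "(LINT x:A|M. (\<Sum>i\<in>I. g i x)) = (\<Sum>i\<in>I. LINT x:A|M. g i x)"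
proof -
  have "\<And>i. i \<in> I \<Longrightarrow> integrable M (\<lambda>x. indicator A x * g i x)"
    using assms by (simp add: set_integrable_def)
  then show ?thesis unfolding set_lebesgue_integral_def
    by (simp add: sum_distrib_left integral_sum)
qed

lemma set_integrable_sum':
  fixes g :: "'i \<Rightarrow> 'b \<Rightarrow> real"
  assumes "\<And>i. i \<in> I \<Longrightarrow> set_integrable M A (g i)"
  shows "set_integrable M A (\<lambda>x. \<Sum>i\<in>I. g i x)"
proof -
  have "\<And>i. i \<in> I \<Longrightarrow> integrable M (\<lambda>x. indicator A x * g i x)"
    using assms by (simp add: set_integrable_def)
  then show ?thesis unfolding set_integrable_def
    by (simp add: sum_distrib_left integrable_sum)
qed

lemma refl_int:
  fixes H :: "real \<Rightarrow> real"
  assumes [measurable]: "H \<in> borel_measurable lborel"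
  shows "(LINT \<theta>:{1/2<..1}|lborel. H (1-\<theta>)) = (LINT \<theta>:{0..1/2}|lborel. H \<theta>)"
proof -
  have "(LINT \<theta>:{0..1/2}|lborel. H \<theta>) = (LINT \<theta>:{0..<1/2}|lborel. H \<theta>)"
    apply (rule set_integral_cong_set)
    using AE_lborel_singleton[of "1/2::real"]
    by (auto simp: set_borel_measurable_def elim!: eventually_mono)
  also have "\<dots> = integral\<^sup>L lborel (\<lambda>u. indicator {0..<1/2} u * H u)"
    by (simp add: set_lebesgue_integral_def)
  also have "\<dots> = \<bar>-1\<bar> *\<^sub>R integral\<^sup>L lborel (\<lambda>\<theta>. indicator {0..<1/2} (1 + -1*\<theta>) * H (1 + -1*\<theta>))"
    by (rule lborel_integral_real_affine) simp
  also have "\<dots> = integral\<^sup>L lborel (\<lambda>\<theta>. indicator {1/2<..1} \<theta> * H (1 - \<theta>))"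
  proof -
    have eq: "(\<lambda>\<theta>. indicator {0..<1/2} (1 + -1*\<theta>) * H (1 + -1*\<theta>)) = (\<lambda>\<theta>. indicator {1/2<..1} \<theta> * H (1 - \<theta>) :: real)"
      by (rule ext) (auto simp: indicator_def)
    show ?thesis by (simp only: eq) simp
  qed
  also have "\<dots> = (LINT \<theta>:{1/2<..1}|lborel. H (1-\<theta>))"
    by (simp add: set_lebesgue_integral_def)
  finally show ?thesis by simp
qed

theorem lemma2:
  fixes V :: "'a set" and f :: "'a set \<Rightarrow> real" and k :: nat
    and t :: "nat \<Rightarrow> 'a" and x :: "nat \<Rightarrow> 'a \<Rightarrow> real"
  assumes "finite V"
    and "\<And>S. S \<subseteq> V \<Longrightarrow> f S \<ge> 0"
    and "submodular_on V f"
    and "t ` {..<k} \<subseteq> V" and "inj_on t {..<k}"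
    and "\<And>i j. i < k \<Longrightarrow> j \<in> V \<Longrightarrow> x i j \<ge> 0"
    and "\<And>j. j \<in> V \<Longrightarrow> (\<Sum>i<k. x i j) = 1"
    and "\<And>i. i < k \<Longrightarrow> x i (t i) = 1"
  shows "expected_rounding_cost V k f x =
           (2 - 2 / real k) * (\<Sum>i<k. LINT \<theta>:{1/2<..1}|lborel. f (A_set V x i \<theta>))
         + (2 / real k) * (\<Sum>i<k. LINT \<theta>:{0..1/2}|lborel. f (A_set V x i \<theta> \<union> B_set V k x \<theta>))"
proof -
  define Mx where "Mx j = Max ((\<lambda>i. x i j) ` {..<k})" for j
  define I where "I i = (LINT \<theta>:{1/2<..1}|lborel. f (A_set V x i \<theta>))" for i
  define J where "J i = (LINT \<theta>:{1/2<..1}|lborel. f (A_set V x i \<theta> \<union> U_set V k x \<theta>))" for i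
  define K where "K i = (LINT \<theta>:{0..1/2}|lborel. f (A_set V x i \<theta> \<union> B_set V k x \<theta>))" for i
  have AU: "A_set V x i \<theta> \<union> U_set V k x \<theta> = {j\<in>V. \<theta> < x i j \<or> Mx j \<le> \<theta>}" for i \<theta>
    unfolding A_set_def U_set_def Mx_def by auto
  have AB: "A_set V x i \<theta> \<union> B_set V k x \<theta> = {j\<in>V. \<theta> < x i j \<or> \<theta> \<le> 1 - Mx j}" for i \<theta>
    unfolding A_set_def B_set_def Mx_def by auto
  have intA: "set_integrable lborel {1/2<..1} (\<lambda>\<theta>. f (A_set V x i \<theta>))" for i
    unfolding A_set_def by (rule fun_setint[OF assms(1)]) (auto simp: less_top[symmetric])
  have intAU: "set_integrable lborel {1/2<..1} (\<lambda>\<theta>. f (A_set V x i \<theta> \<union> U_set V k x \<theta>))" for i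
    unfolding AU by (rule fun_setint[OF assms(1)]) (auto simp: less_top[symmetric])
  have measAB: "(\<lambda>\<theta>. f (A_set V x i \<theta> \<union> B_set V k x \<theta>)) \<in> borel_measurable lborel" for i
    unfolding AB by (rule fun_meas[OF assms(1)]) auto
  have pw: "A_set V x i \<theta> \<union> U_set V k x \<theta> = A_set V x i (1-\<theta>) \<union> B_set V k x (1-\<theta>)"
    if ik: "i < k" and th: "\<theta> \<in> {1/2<..1}" for i \<theta>
  proof -
    have key: "\<theta> < x i j" if j: "j \<in> V" "1 - \<theta> < x i j" "\<not> Mx j \<le> \<theta>" for j
    proof -
      have ne: "(\<lambda>i. x i j) ` {..<k} \<noteq> {}" using ik by auto
      have "Mx j \<in> (\<lambda>i. x i j) ` {..<k}" unfolding Mx_def by (rule Max_in) (use ne in auto)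
      then obtain i2 where i2: "i2 < k" "x i2 j = Mx j" by auto
      show ?thesis
      proof (cases "i2 = i")
        case True then show ?thesis using i2 j by auto
      next
        case False
        have "(\<Sum>l\<in>{i,i2}. x l j) \<le> (\<Sum>l<k. x l j)"
          by (rule sum_mono2) (use ik i2 assms(6) j in auto)
        then have "x i j + x i2 j \<le> 1" using False assms(7)[OF j(1)] by simp
        then show ?thesis using j i2 by linarith
      qed
    qed
    have "B_set V k x (1-\<theta>) = U_set V k x \<theta>"
      unfolding B_set_def U_set_def by auto
    moreover have "A_set V x i \<theta> \<subseteq> A_set V x i (1-\<theta>)"
      using th unfolding A_set_def by auto
    moreover have "A_set V x i (1-\<theta>) \<subseteq> A_set V x i \<theta> \<union> U_set V k x \<theta>"
      using key unfolding A_set_def U_set_def Mx_def by auto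
    ultimately show ?thesis by blast
  qed
  have JK: "J i = K i" if "i < k" for i
  proof -
    have "J i = (LINT \<theta>:{1/2<..1}|lborel. f (A_set V x i (1-\<theta>) \<union> B_set V k x (1-\<theta>)))"
      unfolding J_def by (rule set_lebesgue_integral_cong) (use pw[OF that] in auto)
    also have "\<dots> = K i" unfolding K_def
      by (rule refl_int[where H="\<lambda>\<theta>. f (A_set V x i \<theta> \<union> B_set V k x \<theta>)"]) (rule measAB)
    finally show ?thesis .
  qed
  have step1: "(\<Sum>i<k. f (rounded_part V k x \<theta> i' i)) =
       (\<Sum>i<k. f (A_set V x i \<theta>)) - f (A_set V x i' \<theta>) + f (A_set V x i' \<theta> \<union> U_set V k x \<theta>)"
    if "i' < k" for i' \<theta>
  proof -
    have "(\<Sum>i<k. f (rounded_part V k x \<theta> i' i)) = f (rounded_part V k x \<theta> i' i') + (\<Sum>i\<in>{..<k}-{i'}. f (rounded_part V k x \<theta> i' i))"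
      by (rule sum.remove) (use that in auto)
    also have "(\<Sum>i\<in>{..<k}-{i'}. f (rounded_part V k x \<theta> i' i)) = (\<Sum>i\<in>{..<k}-{i'}. f (A_set V x i \<theta>))"
      by (rule sum.cong) (auto simp: rounded_part_def)
    also have "(\<Sum>i<k. f (A_set V x i \<theta>)) = f (A_set V x i' \<theta>) + (\<Sum>i\<in>{..<k}-{i'}. f (A_set V x i \<theta>))"
      by (rule sum.remove) (use that in auto)
    ultimately show ?thesis by (simp add: rounded_part_def)
  qed
  have step2: "(LINT \<theta>:{1/2<..1}|lborel. 2 * (\<Sum>i<k. f (rounded_part V k x \<theta> i' i))) =
      2 * ((\<Sum>i<k. I i) - I i' + J i')" if "i' < k" for i'
  proof -
    have "(LINT \<theta>:{1/2<..1}|lborel. 2 * (\<Sum>i<k. f (rounded_part V k x \<theta> i' i))) =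
      2 * (LINT \<theta>:{1/2<..1}|lborel. (\<Sum>i<k. f (A_set V x i \<theta>)) - f (A_set V x i' \<theta>) + f (A_set V x i' \<theta> \<union> U_set V k x \<theta>))"
      by (simp only: step1[OF that]) (rule set_integral_mult_right)
    also have "(LINT \<theta>:{1/2<..1}|lborel. (\<Sum>i<k. f (A_set V x i \<theta>)) - f (A_set V x i' \<theta>) + f (A_set V x i' \<theta> \<union> U_set V k x \<theta>))
       = (LINT \<theta>:{1/2<..1}|lborel. (\<Sum>i<k. f (A_set V x i \<theta>)) - f (A_set V x i' \<theta>)) + J i'"
      unfolding J_def
      by (rule set_integral_add) (auto intro!: set_integrable_sum' intA intAU)
    also have "(LINT \<theta>:{1/2<..1}|lborel. (\<Sum>i<k. f (A_set V x i \<theta>)) - f (A_set V x i' \<theta>))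
       = (LINT \<theta>:{1/2<..1}|lborel. (\<Sum>i<k. f (A_set V x i \<theta>))) - I i'"
      unfolding I_def
      by (rule set_integral_diff) (auto intro!: set_integrable_sum' intA)
    also have "(LINT \<theta>:{1/2<..1}|lborel. (\<Sum>i<k. f (A_set V x i \<theta>))) = (\<Sum>i<k. I i)"
      unfolding I_def by (rule set_integral_sum') (rule intA)
    finally show ?thesis .
  qed
  show ?thesis
  proof (cases "k = 0")
    case True then show ?thesis by (simp add: expected_rounding_cost_def)
  next
    case False
    have "expected_rounding_cost V k f x = (\<Sum>i'<k. (1 / real k) * (2 * ((\<Sum>i<k. I i) - I i' + J i')))"
      unfolding expected_rounding_cost_def by (rule sum.cong) (simp_all only: lessThan_iff step2)
    also have "\<dots> = (2 / real k) * (\<Sum>i'<k. (\<Sum>i<k. I i)) - (2 / real k) * (\<Sum>i'<k. I i') + (2 / real k) * (\<Sum>i'<k. J i')"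
      by (simp add: sum_distrib_left sum_subtractf sum.distrib sum_divide_distrib algebra_simps)
    also have "(\<Sum>i'<k. J i') = (\<Sum>i'<k. K i')" by (rule sum.cong) (auto simp: JK)
    also have "(2 / real k) * (\<Sum>i'<k. (\<Sum>i<k. I i)) = 2 * (\<Sum>i<k. I i)" using False by simp
    finally show ?thesis unfolding I_def[symmetric] K_def[symmetric] by (simp add: algebra_simps)
  qed
qed

end
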